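(* Let $m,\Delta$ be positive integers and $X\subseteq\{-\Delta,\dots,\Delta\}^m$ such that $C=\mathrm{cone}(X)$ is pointed. Then there is a halfspace $H=\{x\in\mathbb{R}^m: d^{\mathsf T}x\ge 0\}$ with $C\cap H=\{\mathbf 0\}$, defined by some $d\in\mathbb{Z}^m$ with \[ \|d\|_\infty\le\Delta^m m^{m/2+1}. \]
   Context: $\mathrm{cone}(X)=\{\sum_{x\in X}\lambda_x x:\lambda_x\ge0\}$. A cone is pointed if $\mathbf 0$ is a vertex of it. *)

theory Defs
  imports "HOL-Analysis.Analysis"
begin

definition conic_comb :: "('a::real_vector) set \<Rightarrow> 'a set" where
  "conic_comb X = {y. \<exists>c. (\<forall>x\<in>X. c x \<ge> 0) \<and> y = (\<Sum>x\<in>X. c x *\<^sub>R x)}"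

definition pointed_cone :: "('a::real_vector) set \<Rightarrow> bool" where
  "pointed_cone C \<longleftrightarrow> 0 extreme_point_of C"

end

theory Submission
  imports Defs
begin


lemma det_orth_rows:
  fixes A :: "real^'n^'n"
  assumes "\<And>i j. i \<noteq> j \<Longrightarrow> row i A \<bullet> row j A = 0"
  shows "\<bar>det A\<bar> = (\<Prod>i\<in>UNIV. norm (row i A))"
proof -
  have e: "(A ** transpose A) $ i $ j = row i A \<bullet> row j A" for i j
    by (simp add: matrix_matrix_mult_def transpose_def inner_vec_def row_def mult.commute)
  have "det (A ** transpose A) = (\<Prod>i\<in>UNIV. row i A \<bullet> row i A)"
    by (subst det_diagonal) (auto simp: e assms)
  also have "\<dots> = (\<Prod>i\<in>UNIV. norm (row i A))^2"
    by (simp add: power2_norm_eq_inner[symmetric] prod_power_distrib)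
  finally have "\<bar>det A\<bar>^2 = (\<Prod>i\<in>UNIV. norm (row i A))^2"
    by (simp add: det_mul power2_eq_square)
  then show ?thesis
    by (rule power2_eq_imp_eq) (auto intro: prod_nonneg)
qed

lemma gram_schmidt_rows:
  fixes A :: "real^'n^'n"
  assumes "finite S"
  shows "\<exists>A'. det A' = det A \<and> (\<forall>i. norm (row i A') \<le> norm (row i A))
     \<and> (\<forall>i\<in>S. \<forall>j\<in>S. i \<noteq> j \<longrightarrow> row i A' \<bullet> row j A' = 0)"
  using assms
proof (induction S rule: finite_induct)
  case empty
  then show ?case by blast
next
  case (insert a S)
  then obtain A' where d: "det A' = det A" and n: "\<forall>i. norm (row i A') \<le> norm (row i A)"
    and o: "\<forall>i\<in>S. \<forall>j\<in>S. i \<noteq> j \<longrightarrow> row i A' \<bullet> row j A' = 0" by blast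
  define c where "c j = (row a A' \<bullet> row j A') / (row j A' \<bullet> row j A')" for j
  define p where "p = (\<Sum>j\<in>S. c j *\<^sub>R row j A')"
  define A'' where "A'' = (\<chi> k. if k = a then row a A' + (- p) else row k A')"
  have rA: "row k A'' = (if k = a then row a A' - p else row k A')" for k
    by (simp add: A''_def row_def)
  have "- p \<in> vec.span {row j A' |j. j \<noteq> a}"
    unfolding p_def span_vec_eq using insert.hyps(2)
    by (intro span_neg span_sum span_mul span_base) auto
  hence d2: "det A'' = det A'" unfolding A''_def by (rule det_row_span)
  have orth: "(row a A' - p) \<bullet> row j A' = 0" if "j \<in> S" for j
  proof -
    have "p \<bullet> row j A' = (\<Sum>l\<in>S. c l * (row l A' \<bullet> row j A'))"
      unfolding p_def by (simp add: inner_sum_left)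
    also have "\<dots> = c j * (row j A' \<bullet> row j A')"
      using o that insert.hyps(1) by (subst sum.remove[of _ j]) (auto intro!: sum.neutral)
    also have "\<dots> = row a A' \<bullet> row j A'"
      by (cases "row j A' \<bullet> row j A' = 0") (auto simp: c_def)
    finally show ?thesis by (simp add: inner_diff_left)
  qed
  have qp: "(row a A' - p) \<bullet> p = 0"
    by (subst (2) p_def) (simp add: inner_sum_right orth)
  have "norm (row a A' - p)^2 \<le> norm (row a A')^2"
  proof -
    have "row a A' = (row a A' - p) + p" by simp
    hence "norm (row a A')^2 = norm (row a A' - p)^2 + norm p ^2"
      by (metis norm_add_Pythagorean orthogonal_def qp)
    thus ?thesis by simp
  qed
  hence "norm (row a A' - p) \<le> norm (row a A')"
    using norm_ge_zero power2_le_imp_le by blast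
  hence n2: "norm (row i A'') \<le> norm (row i A)" for i
    using n by (auto simp: rA intro: order_trans)
  have o2: "\<forall>i\<in>insert a S. \<forall>j\<in>insert a S. i \<noteq> j \<longrightarrow> row i A'' \<bullet> row j A'' = 0"
    using o orth insert.hyps(2) by (auto simp: rA inner_commute)
  show ?case using d d2 n2 o2 by metis
qed

lemma hadamard:
  fixes A :: "real^'n^'n"
  shows "\<bar>det A\<bar> \<le> (\<Prod>i\<in>UNIV. norm (row i A))"
proof -
  obtain A' where d: "det A' = det A" and n: "\<forall>i. norm (row i A') \<le> norm (row i A)"
     and o: "\<forall>i\<in>UNIV. \<forall>j\<in>UNIV. i \<noteq> j \<longrightarrow> row i A' \<bullet> row j A' = 0"
    using gram_schmidt_rows[of UNIV A] by auto
  have "\<bar>det A\<bar> = (\<Prod>i\<in>UNIV. norm (row i A'))" using det_orth_rows[of A'] o d by auto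
  also have "\<dots> \<le> (\<Prod>i\<in>UNIV. norm (row i A))" by (intro prod_mono) (auto simp: n)
  finally show ?thesis .
qed



lemma vertex_step:
  fixes Y :: "(real^'n) set" and d :: "real^'n"
  assumes fin: "finite Y" and F: "\<forall>y\<in>Y. d \<bullet> y \<le> -1"
    and y: "y \<in> Y" "y \<notin> span {z\<in>Y. d \<bullet> z = -1}"
  shows "\<exists>d'. (\<forall>y\<in>Y. d' \<bullet> y \<le> -1) \<and> dim {z\<in>Y. d \<bullet> z = -1} < dim {z\<in>Y. d' \<bullet> z = -1}"
proof -
  define A where "A = {z\<in>Y. d \<bullet> z = -1}"
  have sp: "span A \<subset> span (insert y A)"
    using y A_def by (metis span_base span_mono subset_insertI insertI1 psubsetI)
  obtain u where u: "u \<noteq> 0" "u \<in> span (insert y A)" "\<And>w. w \<in> span A \<Longrightarrow> orthogonal u w"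
    by (rule orthogonal_to_subspace_exists_gen[OF sp]) (rule that, assumption+)
  obtain k where k: "u - k *\<^sub>R y \<in> span A" using u(2) span_breakdown_eq by blast
  have "u \<bullet> (u - k *\<^sub>R y) = 0" using u(3)[OF k] by (simp add: orthogonal_def)
  hence "u \<bullet> u = k * (u \<bullet> y)" by (simp add: inner_diff_right)
  hence uy: "u \<bullet> y \<noteq> 0" using u(1) by auto
  define v where "v = (if u \<bullet> y > 0 then u else - u)"
  have vy: "v \<bullet> y > 0" using uy by (auto simp: v_def)
  have vA: "v \<bullet> w = 0" if "w \<in> span A" for w
    using u(3)[OF that] by (auto simp: v_def orthogonal_def)
  define Z where "Z = {z\<in>Y. v \<bullet> z > 0}"
  define g where "g z = (-1 - d \<bullet> z) / (v \<bullet> z)" for z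
  have Zfin: "finite Z" and Zne: "Z \<noteq> {}" using fin y vy by (auto simp: Z_def)
  define t where "t = Min (g ` Z)"
  have "t \<in> g ` Z" unfolding t_def using Zfin Zne by (intro Min_in) auto
  then obtain zs where zs: "zs \<in> Z" "g zs = t" by auto
  have tle: "t \<le> g z" if "z \<in> Z" for z using Zfin that unfolding t_def by auto
  have t0: "t \<ge> 0" using zs F by (auto simp: g_def Z_def intro!: divide_nonneg_pos)
  define d' where "d' = d + t *\<^sub>R v"
  have F': "\<forall>z\<in>Y. d' \<bullet> z \<le> -1"
  proof
    fix z assume z: "z \<in> Y"
    show "d' \<bullet> z \<le> -1"
    proof (cases "v \<bullet> z > 0")
      case True
      hence "t \<le> (-1 - d \<bullet> z) / (v \<bullet> z)" using tle[of z] z by (auto simp: Z_def g_def)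
      hence "t * (v \<bullet> z) \<le> -1 - d \<bullet> z" using True by (simp add: pos_le_divide_eq)
      thus ?thesis by (simp add: d'_def inner_add_left)
    next
      case False
      hence "t * (v \<bullet> z) \<le> 0" using t0 by (simp add: mult_nonneg_nonpos)
      moreover have "d \<bullet> z \<le> -1" using F z by blast
      ultimately show ?thesis by (simp add: d'_def inner_add_left)
    qed
  qed
  have sub: "insert zs A \<subseteq> {z\<in>Y. d' \<bullet> z = -1}"
  proof -
    have "d' \<bullet> zs = -1" using zs by (auto simp: d'_def g_def Z_def inner_add_left)
    moreover have "d' \<bullet> a = -1" if "a \<in> A" for a
      using vA[OF span_base[OF that]] that by (simp add: d'_def A_def inner_add_left)
    ultimately show ?thesis using zs(1) by (auto simp: Z_def A_def)
  qed
  have "zs \<notin> span A"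
  proof
    assume "zs \<in> span A"
    hence "v \<bullet> zs = 0" by (rule vA)
    with zs(1) show False by (simp add: Z_def)
  qed
  hence "dim (insert zs A) = dim A + 1" by (simp add: dim_insert)
  hence "dim A < dim {z\<in>Y. d' \<bullet> z = -1}" using dim_subset[OF sub] by simp
  thus ?thesis using F' A_def by blast
qed

lemma vertex_exists:
  fixes Y :: "(real^'n) set" and d0 :: "real^'n"
  assumes fin: "finite Y" and F: "\<forall>y\<in>Y. d0 \<bullet> y \<le> -1"
  shows "\<exists>d. (\<forall>y\<in>Y. d \<bullet> y \<le> -1) \<and> Y \<subseteq> span {z\<in>Y. d \<bullet> z = -1}"
proof -
  define P where "P k = (\<exists>d. (\<forall>y\<in>Y. d \<bullet> y \<le> -1) \<and> k = dim {z\<in>Y. d \<bullet> z = -1})" for k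
  have p0: "P (dim {z\<in>Y. d0 \<bullet> z = -1})" unfolding P_def using F by blast
  have bnd: "\<forall>k. P k \<longrightarrow> k \<le> CARD('n)"
    unfolding P_def by (clarify, rule dim_subset_UNIV_cart)
  have "\<exists>k. P k \<and> (\<forall>j. P j \<longrightarrow> j \<le> k)" by (rule Nat.ex_has_greatest_nat[OF p0 bnd])
  then obtain k where k: "P k" "\<forall>j. P j \<longrightarrow> j \<le> k" by blast
  then obtain d where d: "\<forall>y\<in>Y. d \<bullet> y \<le> -1" "k = dim {z\<in>Y. d \<bullet> z = -1}" unfolding P_def by blast
  have "Y \<subseteq> span {z\<in>Y. d \<bullet> z = -1}"
  proof
    fix y assume y: "y \<in> Y"
    show "y \<in> span {z\<in>Y. d \<bullet> z = -1}"
    proof (rule ccontr)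
      assume "y \<notin> span {z\<in>Y. d \<bullet> z = -1}"
      then obtain d' where d': "\<forall>y\<in>Y. d' \<bullet> y \<le> -1" "dim {z\<in>Y. d \<bullet> z = -1} < dim {z\<in>Y. d' \<bullet> z = -1}"
        using vertex_step[OF fin d(1) y] by blast
      have "P (dim {z\<in>Y. d' \<bullet> z = -1})" unfolding P_def using d'(1) by blast
      hence "dim {z\<in>Y. d' \<bullet> z = -1} \<le> k" using k(2) by blast
      thus False using d'(2) d(2) by simp
    qed
  qed
  thus ?thesis using d(1) by blast
qed

 

lemma det_Ints:
  fixes A :: "real^'n^'n"
  assumes "\<And>i j. A$i$j \<in> \<int>"
  shows "det A \<in> \<int>"
  unfolding det_def by (intro Ints_sum Ints_mult Ints_prod) (auto simp: assms)

lemma infnorm_bound_cart: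
  fixes v :: "real^'n"
  assumes "\<And>i. \<bar>v$i\<bar> \<le> c"
  shows "infnorm v \<le> c"
  unfolding infnorm_cart by (rule cSup_least) (auto simp: assms)

lemma norm_bound_cart:
  fixes v :: "real^'n"
  assumes "\<And>i. \<bar>v$i\<bar> \<le> c"
  shows "norm v \<le> sqrt (CARD('n)) * c"
proof -
  have "norm v \<le> sqrt (DIM(real^'n)) * infnorm v" by (rule norm_le_infnorm)
  also have "\<dots> \<le> sqrt (CARD('n)) * c"
    using infnorm_bound_cart[OF assms] by (simp add: mult_left_mono)
  finally show ?thesis .
qed

lemma Basis_entries_cart:
  assumes "b \<in> (Basis :: (real^'n) set)"
  shows "b$i = 0 \<or> b$i = 1"
  using assms by (auto simp: Basis_vec_def axis_def)

lemma integer_solution: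
  fixes B :: "(real^'n) set" and D :: real
  assumes ind: "independent B" and D1: "D \<ge> 1"
    and Bb: "\<And>b i. b \<in> B \<Longrightarrow> b$i \<in> \<int> \<and> \<bar>b$i\<bar> \<le> D"
  shows "\<exists>d c. (\<forall>i. d$i \<in> \<int>) \<and> c > 0 \<and> (\<forall>b\<in>B. d \<bullet> b = -c)
     \<and> (\<forall>i. \<bar>d$i\<bar> \<le> (sqrt (CARD('n)) * D)^CARD('n))"
proof -
  obtain B' where B': "B \<subseteq> B'" "B' \<subseteq> B \<union> Basis" "independent B'" "B \<union> Basis \<subseteq> span B'"
    using maximal_independent_subset_extend[of B "B \<union> Basis"] ind by blast
  have "span Basis \<subseteq> span (span B')" using B'(4) by (intro span_mono) auto
  hence spanU: "span B' = UNIV" by (auto simp: span_span)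
  have finB': "finite B'" using independent_bound_general B'(3) by blast
  have "card B' = dim (span B')" using dim_span_eq_card_independent[OF B'(3)] by simp
  also have "\<dots> = CARD('n)" using spanU by simp
  finally have cardB': "card B' = CARD('n)" .
  obtain f where f: "bij_betw f (UNIV::'n set) B'"
    using finite_same_card_bij[of "UNIV::'n set" B'] finB' cardB' by auto
  define M :: "real^'n^'n" where "M = (\<chi> i. f i)"
  have rowM: "row i M = f i" for i by (simp add: M_def row_def)
  have Mij: "M$i$j = f i $ j" for i j by (simp add: M_def)
  have "rows M = B'" using f by (auto simp: rows_def rowM bij_betw_def)
  hence "span (rows M) = UNIV" using spanU by simp
  then obtain N :: "real^'n^'n" where "N ** M = mat 1" using matrix_left_invertible_span_rows by blast
  hence "det N * det M = 1" by (metis det_I det_mul)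
  hence dM: "det M \<noteq> 0" by auto
  define r :: "real^'n" where "r = (\<chi> i. if f i \<in> B then -1 else 0)"
  define Mk where "Mk k = (\<chi> i j. if j = k then r$i else M$i$j)" for k
  define x where "x = (\<chi> k. det (Mk k) / det M)"
  have Mx: "M *v x = r" using cramer[OF dM, of x r] by (simp add: x_def Mk_def)
  define d where "d = (\<chi> k. sgn (det M) * det (Mk k))"
  have dx: "d = \<bar>det M\<bar> *\<^sub>R x"
    using dM by (auto simp: vec_eq_iff d_def x_def sgn_if)
  have db: "d \<bullet> b = - \<bar>det M\<bar>" if bB: "b \<in> B" for b
  proof -
    obtain i where i: "f i = b" using f bB B'(1) by (auto simp: bij_betw_def)
    have "(M *v x)$i = -1" using Mx i bB by (simp add: r_def)
    hence "x \<bullet> b = -1" using i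
      by (simp add: matrix_vector_mult_def inner_vec_def Mij mult.commute)
    thus ?thesis by (simp add: dx)
  qed
  have ent: "Mk k $ i $ j \<in> \<int> \<and> \<bar>Mk k $ i $ j\<bar> \<le> D" for k i j
  proof (cases "j = k")
    case True
    then show ?thesis using D1 by (auto simp: Mk_def r_def)
  next
    case False
    have "f i \<in> B'" using f by (auto simp: bij_betw_def)
    hence "f i \<in> B \<or> f i \<in> Basis" using B'(2) by auto
    then show ?thesis
    proof
      assume "f i \<in> B" thus ?thesis using False Bb by (simp add: Mk_def Mij)
    next
      assume "f i \<in> Basis"
      hence "f i $ j = 0 \<or> f i $ j = 1" by (rule Basis_entries_cart)
      thus ?thesis using False D1 by (auto simp: Mk_def Mij)
    qed
  qed
  have dint: "d$k \<in> \<int>" for k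
  proof -
    have "det (Mk k) \<in> \<int>" using ent by (intro det_Ints) blast
    moreover have "sgn (det M) \<in> \<int>" by (simp add: sgn_if)
    ultimately show ?thesis by (simp add: d_def)
  qed
  have dbound: "\<bar>d$k\<bar> \<le> (sqrt (CARD('n)) * D)^CARD('n)" for k
  proof -
    have "\<bar>d$k\<bar> = \<bar>det (Mk k)\<bar>" using dM by (simp add: d_def abs_mult abs_sgn_eq)
    also have "\<dots> \<le> (\<Prod>i\<in>UNIV. norm (row i (Mk k)))" by (rule hadamard)
    also have "\<dots> \<le> (\<Prod>i\<in>(UNIV::'n set). sqrt (CARD('n)) * D)"
      by (intro prod_mono conjI norm_ge_zero norm_bound_cart) (use ent in \<open>auto simp: row_def\<close>)
    also have "\<dots> = (sqrt (CARD('n)) * D)^CARD('n)" by simp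
    finally show ?thesis .
  qed
  show ?thesis
    using dint dbound db dM by (intro exI[of _ d] exI[of _ "\<bar>det M\<bar>"]) auto
qed

lemma finite_box_ints:
  "finite {x :: real^'n. \<forall>i. x $ i \<in> \<int> \<and> \<bar>x $ i\<bar> \<le> real D}"
proof -
  define T where "T = {t::real. t \<in> \<int> \<and> \<bar>t\<bar> \<le> real D}"
  have "T \<subseteq> of_int ` {-int D..int D}"
  proof
    fix t assume "t \<in> T"
    then obtain k where k: "t = of_int k" "\<bar>of_int k\<bar> \<le> real D" unfolding T_def by (auto elim: Ints_cases)
    hence "k \<in> {-int D..int D}" by auto
    thus "t \<in> of_int ` {-int D..int D}" using k by auto
  qed
  hence finT: "finite T" by (rule finite_subset) auto
  have "{x :: real^'n. \<forall>i. x $ i \<in> \<int> \<and> \<bar>x $ i\<bar> \<le> real D} \<subseteq> (\<lambda>g. \<chi> i. g i) ` (PiE UNIV (\<lambda>_. T))"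
  proof
    fix x :: "real^'n" assume "x \<in> {x. \<forall>i. x $ i \<in> \<int> \<and> \<bar>x $ i\<bar> \<le> real D}"
    hence "(\<lambda>i. x$i) \<in> PiE UNIV (\<lambda>_. T)" by (auto simp: T_def)
    moreover have "x = (\<chi> i. x$i)" by simp
    ultimately show "x \<in> (\<lambda>g. \<chi> i. g i) ` (PiE UNIV (\<lambda>_. T))" by blast
  qed
  moreover have "finite ((\<lambda>g. (\<chi> i. g i)::real^'n) ` (PiE UNIV (\<lambda>_. T)))"
    using finT by (intro finite_imageI finite_PiE) auto
  ultimately show ?thesis by (rule finite_subset)
qed

lemma pointed_no_comb:
  fixes X :: "'a::real_vector set"
  assumes fin: "finite X" and pc: "pointed_cone (conic_comb X)"
    and c: "\<forall>x\<in>X. c x \<ge> 0" and s: "(\<Sum>x\<in>X. c x *\<^sub>R x) = 0"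
    and y: "y \<in> X" "y \<noteq> 0"
  shows "c y = 0"
proof (rule ccontr)
  assume "c y \<noteq> 0"
  hence cy: "c y > 0" using c y by force
  define u where "u = c y *\<^sub>R y"
  have u0: "u \<noteq> 0" using cy y by (simp add: u_def)
  have "(\<Sum>x\<in>X. (if x = y then c y else 0) *\<^sub>R x) = (\<Sum>x\<in>X. if x = y then u else 0)"
    by (intro sum.cong) (auto simp: u_def)
  also have "\<dots> = u" using fin y by simp
  finally have "u \<in> conic_comb X" unfolding conic_comb_def using cy
    by (intro CollectI exI[of _ "\<lambda>x. if x = y then c y else 0"]) auto
  moreover have "- u \<in> conic_comb X"
  proof -
    have "(\<Sum>x\<in>X. (if x = y then 0 else c x) *\<^sub>R x) = (\<Sum>x\<in>X - {y}. c x *\<^sub>R x)"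
      using fin y by (simp add: sum.remove[of X y] if_distrib cong: if_cong)
      also have "\<dots> = - u" using s fin y by (simp add: sum.remove[of X y] u_def eq_neg_iff_add_eq_0 add.commute)
    finally show ?thesis unfolding conic_comb_def using c
      by (intro CollectI exI[of _ "\<lambda>x. if x = y then 0 else c x"]) auto
  qed
  moreover have "0 \<in> open_segment u (- u)"
  proof -
    have "u \<noteq> - u"
    proof
      assume "u = - u"
      hence "2 *\<^sub>R u = 0" by (metis scaleR_2 add.right_inverse)
      thus False using u0 by simp
    qed
    hence "midpoint u (-u) \<in> open_segment u (-u)" by simp
    moreover have "midpoint u (-u) = 0" by (simp add: midpoint_def)
    ultimately show ?thesis by simp
  qed
  ultimately show False using pc unfolding pointed_cone_def extreme_point_of_def by blast
qed

lemma sqrt_pow_bound: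
  assumes "n \<ge> 1"
  shows "sqrt (real n) ^ n \<le> real n powr (real n / 2 + 1)"
proof -
  have "sqrt (real n) ^ n = (real n powr (1/2)) ^ n" using assms by (simp add: powr_half_sqrt)
  also have "\<dots> = real n powr (real n / 2)" using assms by (simp add: powr_realpow[symmetric] powr_powr)
  also have "\<dots> \<le> real n powr (real n / 2 + 1)" using assms by (intro powr_mono) auto
  finally show ?thesis .
qed


lemma gordan:
  fixes X :: "(real^'n) set"
  assumes fin: "finite X" and pc: "pointed_cone (conic_comb X)"
  shows "\<exists>d0. \<forall>y\<in>X - {0}. d0 \<bullet> y \<le> -1"
proof (cases "X - {0} = {}")
  case True
  then show ?thesis by auto
next
  case False
  define Y where "Y = X - {0}"
  have finY: "finite Y" using fin by (simp add: Y_def)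
  have "0 \<notin> convex hull Y"
  proof
    assume "0 \<in> convex hull Y"
    then obtain u where u: "\<forall>x\<in>Y. 0 \<le> u x" "sum u Y = 1" "(\<Sum>x\<in>Y. u x *\<^sub>R x) = 0"
      using convex_hull_finite[OF finY] by auto
    define c where "c x = (if x = 0 then 0 else u x)" for x
    have "(\<Sum>x\<in>X. c x *\<^sub>R x) = (\<Sum>x\<in>Y. c x *\<^sub>R x)"
      using fin by (intro sum.mono_neutral_right) (auto simp: Y_def)
    also have "\<dots> = (\<Sum>x\<in>Y. u x *\<^sub>R x)" by (intro sum.cong) (auto simp: c_def Y_def)
    finally have s: "(\<Sum>x\<in>X. c x *\<^sub>R x) = 0" using u(3) by simp
    have "\<forall>x\<in>X. c x \<ge> 0" using u(1) by (auto simp: c_def Y_def)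
    hence "c y = 0" if "y \<in> Y" for y
      using pointed_no_comb[OF fin pc _ s] that by (auto simp: Y_def)
    hence "sum u Y = 0" by (intro sum.neutral) (auto simp: c_def Y_def)
    thus False using u(2) by simp
  qed
  moreover have "convex (convex hull Y)" by simp
  moreover have "closed (convex hull Y)"
    using finY by (intro compact_imp_closed compact_convex_hull finite_imp_compact)
  ultimately obtain a b where ab: "a \<bullet> 0 < b" "\<forall>x\<in>convex hull Y. b < a \<bullet> x"
    using separating_hyperplane_closed_point by blast
  have b0: "b > 0" using ab(1) by simp
  have "(- (1/b) *\<^sub>R a) \<bullet> y \<le> -1" if "y \<in> Y" for y
  proof -
    have "b < a \<bullet> y" using ab(2) hull_subset[of Y convex] that by blast
    hence "1 < (a \<bullet> y) / b" using b0 by (simp add: less_divide_eq)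
    thus ?thesis by simp
  qed
  thus ?thesis unfolding Y_def by blast
qed

theorem lemma10:
  fixes X :: "(real ^ 'n) set" and \<Delta> :: nat
  assumes "\<Delta> \<ge> 1"
    and "X \<subseteq> {x. \<forall>i. x $ i \<in> \<int> \<and> \<bar>x $ i\<bar> \<le> real \<Delta>}"
    and "pointed_cone (conic_comb X)"
  shows "\<exists>d :: real ^ 'n. (\<forall>i. d $ i \<in> \<int>)
           \<and> conic_comb X \<inter> {x. d \<bullet> x \<ge> 0} = {0}
           \<and> infnorm d \<le> real \<Delta> ^ CARD('n) * real CARD('n) powr (real CARD('n) / 2 + 1)"
proof -
  note D1 = assms(1) and Xsub = assms(2) and pc = assms(3)
  have fin: "finite X" using finite_subset[OF Xsub finite_box_ints] .
  define Y where "Y = X - {0}"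
  have finY: "finite Y" using fin by (simp add: Y_def)
  obtain d0 where d0: "\<forall>y\<in>Y. d0 \<bullet> y \<le> -1" using gordan[OF fin pc] unfolding Y_def by blast
  obtain d1 where d1: "\<forall>y\<in>Y. d1 \<bullet> y \<le> -1" "Y \<subseteq> span {z\<in>Y. d1 \<bullet> z = -1}"
    using vertex_exists[OF finY d0] by blast
  obtain B where B: "B \<subseteq> {z\<in>Y. d1 \<bullet> z = -1}" "independent B" "{z\<in>Y. d1 \<bullet> z = -1} \<subseteq> span B"
    using maximal_independent_subset[of "{z\<in>Y. d1 \<bullet> z = -1}"] by blast
  have YB: "Y \<subseteq> span B"
  proof -
    have "span {z\<in>Y. d1 \<bullet> z = -1} \<subseteq> span (span B)" using B(3) by (rule span_mono)
    thus ?thesis using d1(2) by (simp add: span_span)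
  qed
  have Bb: "b$i \<in> \<int> \<and> \<bar>b$i\<bar> \<le> real \<Delta>" if "b \<in> B" for b i
    using that B(1) Xsub by (auto simp: Y_def)
  obtain d c where d: "\<forall>i. d$i \<in> \<int>" "c > 0" "\<forall>b\<in>B. d \<bullet> b = -c"
      "\<forall>i. \<bar>d$i\<bar> \<le> (sqrt (CARD('n)) * real \<Delta>)^CARD('n)"
    using integer_solution[OF B(2), of "real \<Delta>"] D1 Bb by auto
  have neg: "d \<bullet> y < 0" if "y \<in> Y" for y
  proof -
    have "orthogonal (d - c *\<^sub>R d1) y"
    proof (rule orthogonal_to_span)
      show "y \<in> span B" using YB that by blast
      fix b assume "b \<in> B"
      thus "orthogonal (d - c *\<^sub>R d1) b" using d(3) B(1)
        by (auto simp: orthogonal_def inner_diff_left)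
    qed
    hence "d \<bullet> y = c * (d1 \<bullet> y)" by (simp add: orthogonal_def inner_diff_left)
    also have "\<dots> \<le> c * (-1)" using d1(1) that d(2) by (intro mult_left_mono) auto
    finally show ?thesis using d(2) by simp
  qed
  have cone: "conic_comb X \<inter> {x. d \<bullet> x \<ge> 0} = {0}"
  proof
    show "{0} \<subseteq> conic_comb X \<inter> {x. d \<bullet> x \<ge> 0}"
      unfolding conic_comb_def by (auto intro!: exI[of _ "\<lambda>_. 0"])
  next
    show "conic_comb X \<inter> {x. d \<bullet> x \<ge> 0} \<subseteq> {0}"
    proof
      fix v assume "v \<in> conic_comb X \<inter> {x. d \<bullet> x \<ge> 0}"
      then obtain a where a: "\<forall>x\<in>X. a x \<ge> 0" "v = (\<Sum>x\<in>X. a x *\<^sub>R x)" and dv: "d \<bullet> v \<ge> 0"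
        unfolding conic_comb_def by auto
      have tn: "a x * (d \<bullet> x) \<le> 0" if "x \<in> X" for x
      proof (cases "x = 0")
        case True thus ?thesis by simp
      next
        case False
        hence "d \<bullet> x < 0" using neg that by (auto simp: Y_def)
        thus ?thesis using a(1) that by (simp add: mult_nonneg_nonpos)
      qed
      have "d \<bullet> v = (\<Sum>x\<in>X. a x * (d \<bullet> x))" using a(2) by (simp add: inner_sum_right)
      hence "(\<Sum>x\<in>X. - (a x * (d \<bullet> x))) \<le> 0" using dv by (simp add: sum_negf)
      moreover have "\<forall>x\<in>X. - (a x * (d \<bullet> x)) \<ge> 0" using tn by auto
      ultimately have "\<forall>x\<in>X. - (a x * (d \<bullet> x)) = 0"
        using sum_nonneg_eq_0_iff[OF fin] by (metis (no_types, lifting) antisym sum_nonneg)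
      hence "a x *\<^sub>R x = 0" if "x \<in> X" for x
      proof (cases "x = 0")
        case False
        hence "d \<bullet> x < 0" using neg that by (auto simp: Y_def)
        thus ?thesis using \<open>\<forall>x\<in>X. - (a x * (d \<bullet> x)) = 0\<close> that by auto
      qed simp
      hence "v = 0" using a(2) by (metis (no_types, lifting) sum.neutral)
      thus "v \<in> {0}" by simp
    qed
  qed
  have "infnorm d \<le> (sqrt (CARD('n)) * real \<Delta>)^CARD('n)"
    using d(4) by (intro infnorm_bound_cart) auto
  also have "\<dots> = real \<Delta> ^ CARD('n) * sqrt (CARD('n)) ^ CARD('n)" by (simp add: power_mult_distrib)
  also have "\<dots> \<le> real \<Delta> ^ CARD('n) * real CARD('n) powr (real CARD('n) / 2 + 1)"
    by (intro mult_left_mono sqrt_pow_bound) auto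
  finally show ?thesis using d(1) cone by blast
qed

end
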